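(* Let $n\ge1$, $K=U(n)$ acting on $\mathcal{O}_\Lambda$ via $k\mapsto\mathrm{diag}(1,k)$, $\underline{\mu}=(\mu_1\ge\dots\ge\mu_n)$, $\mathrm{M}=\mathrm{diag}(\mu_1,\dots,\mu_n)$, and let $p=\begin{pmatrix}c&\mathbf{z}^\dagger\\ \mathbf{z}&\mathrm{M}\end{pmatrix}\in\mathcal{O}_\Lambda$ (so $\Phi(p)=\mathrm{M}$). Let $X\in\mathfrak{u}(n)$ and $\mathbf{x}\in\mathbb{C}^n$ satisfy $0=\mathbf{x}\mathbf{z}^\dagger+\mathbf{z}\mathbf{x}^\dagger+[X,\mathrm{M}]$. If $\mu\in[\underline{\mu}]$ is such that the component of the interlacing pattern of $(\underline{\lambda},\underline{\mu})$ labelled $\mu$ is not an M-shape, then $$(X\mathbf{z})_\mu=\Big(\sum_{\tau\in[\underline{\mu}],\ \text{M-shape}}\frac{r_\tau^2}{\mu-\tau}\Big)\mathbf{x}_\mu.$$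
   Context: $\mathcal{O}_\Lambda\subset\mathcal{H}_{n+1}$ is the set of $(n+1)\times(n+1)$ Hermitian matrices with eigenvalues $\lambda_1\ge\dots\ge\lambda_{n+1}$ (a fixed non-increasing real sequence $\underline{\lambda}$); $K=U(n)$ acts by conjugation by $\mathrm{diag}(1,k)$ and $\Phi(p)$ is the bottom-right $n\times n$ submatrix of $p$. For $p\in\mathcal{O}_\Lambda$ with $\Phi(p)=\mathrm{M}$ the pair $(\underline{\lambda},\underline{\mu})$ satisfies $\lambda_1\ge\mu_1\ge\lambda_2\ge\dots\ge\mu_n\ge\lambda_{n+1}$. Notation: $[\underline{\tau}]$ is the set of distinct values of a sequence, $n_v(\underline{\tau})$ the number of occurrences of $v$. For $\mu\in[\underline{\mu}]$ and $\mathbf{v}\in\mathbb{C}^n$, $\mathbf{v}_\mu\in\mathbb{C}^{n_\mu(\underline{\mu})}$ is the block of coordinates $j$ with $\mu_j=\mu$. For each value $v$ occurring in $\underline{\lambda}$ or $\underline{\mu}$, the component of the interlacing pattern labelled $v$ is an M-shape if $n_v(\underline{\mu})=n_v(\underline{\lambda})+1$, a W-shape if $n_v(\underline{\lambda})=n_v(\underline{\mu})+1$, and a parallelogram-shape if $n_v(\underline{\lambda})=n_v(\underline{\mu})$ (these are the only possibilities). For $\tau\in[\underline{\mu}]$ with M-shape component, $r_\tau>0$ is defined by $r_\tau^2=-\prod_{\lambda\in[\underline{\lambda}],\,\text{W-shape}}(\tau-\lambda)\prod_{\sigma\in[\underline{\mu}],\,\text{M-shape},\,\sigma\neq\tau}\frac{1}{\tau-\sigma}$;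 otherwise $r_\tau=0$. *)

theory Defs
  imports "Jordan_Normal_Form.Char_Poly"
begin

definition hermitian_mat :: "complex mat \<Rightarrow> bool" where
  "hermitian_mat A \<longleftrightarrow> square_mat A \<and>
     (\<forall>i<dim_row A. \<forall>j<dim_row A. A $$ (j,i) = cnj (A $$ (i,j)))"

definition skew_hermitian_mat :: "complex mat \<Rightarrow> bool" where
  "skew_hermitian_mat A \<longleftrightarrow> square_mat A \<and>
     (\<forall>i<dim_row A. \<forall>j<dim_row A. A $$ (j,i) = - cnj (A $$ (i,j)))"

(* the orbit O_Lambda: Hermitian matrices of size length lam whose eigenvalues
   (with multiplicity) are the entries of lam, i.e. whose characteristic
   polynomial is prod_i (t - lam_i) *)
definition orbit_O :: "real list \<Rightarrow> complex mat set" where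
  "orbit_O lam = {p. p \<in> carrier_mat (length lam) (length lam) \<and> hermitian_mat p \<and>
      char_poly p = (\<Prod>i<length lam. [:- complex_of_real (lam ! i), 1:])}"

definition n_occ :: "real \<Rightarrow> real list \<Rightarrow> nat" where
  "n_occ v tau = count_list tau v"

definition M_shape :: "real list \<Rightarrow> real list \<Rightarrow> real \<Rightarrow> bool" where
  "M_shape lam mu v \<longleftrightarrow> n_occ v mu = n_occ v lam + 1"

definition W_shape :: "real list \<Rightarrow> real list \<Rightarrow> real \<Rightarrow> bool" where
  "W_shape lam mu v \<longleftrightarrow> n_occ v lam = n_occ v mu + 1"

definition r_sq :: "real list \<Rightarrow> real list \<Rightarrow> real \<Rightarrow> real" where
  "r_sq lam mu tau = (if tau \<in> set mu \<and> M_shape lam mu tau then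
      - (\<Prod>l\<in>{l \<in> set lam. W_shape lam mu l}. (tau - l))
        * (\<Prod>s\<in>{s \<in> set mu. M_shape lam mu s \<and> s \<noteq> tau}. 1 / (tau - s))
    else 0)"

definition block_p :: "real \<Rightarrow> complex vec \<Rightarrow> real list \<Rightarrow> complex mat" where
  "block_p c z mu = mat (length mu + 1) (length mu + 1) (\<lambda>(i,j).
      if i = 0 \<and> j = 0 then complex_of_real c
      else if i = 0 then cnj (z $ (j - 1))
      else if j = 0 then z $ (i - 1)
      else if i = j then complex_of_real (mu ! (i - 1)) else 0)"

definition diag_mat_of :: "real list \<Rightarrow> complex mat" where
  "diag_mat_of mu = mat (length mu) (length mu) (\<lambda>(i,j).
      if i = j then complex_of_real (mu ! i) else 0)"

definition outer :: "complex vec \<Rightarrow> complex vec \<Rightarrow> complex mat" where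
  "outer v w = mat (dim_vec v) (dim_vec w) (\<lambda>(i,j). v $ i * cnj (w $ j))"

end

theory Submission
  imports Defs
begin

lemma prod_list_map_upt0: "prod_list (map f [0..<m]) = (\<Prod>i<m. f i)"
  by (induct m) auto

lemma prod_list_diag: "A \<in> carrier_mat m m \<Longrightarrow> prod_list (diag_mat A) = (\<Prod>i<m. A $$ (i,i))"
  unfolding diag_mat_def by (simp add: prod_list_map_upt0)

lemma det_block:
  fixes t :: complex
  assumes z: "z \<in> carrier_vec n" and mu: "length mu = n" and t: "\<forall>j<n. t \<noteq> of_real(mu!j)"
  shows "poly (char_poly (block_p c z mu)) t = (\<Prod>j<n. t - of_real(mu!j)) *
     (t - of_real c - (\<Sum>j<n. cnj(z$j) * z$j / (t - of_real(mu!j))))"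
proof -
  define p where "p = block_p c z mu"
  have pc: "p \<in> carrier_mat (n+1) (n+1)" unfolding p_def block_p_def using mu by auto
  define B where "B = - char_matrix p t"
  have Bc: "B \<in> carrier_mat (n+1) (n+1)" using pc unfolding B_def by auto
  have Bij: "B $$ (i,j) = (if i = 0 \<and> j = 0 then t - of_real c else if i = 0 then - cnj (z$(j-1))
     else if j = 0 then - z$(i-1) else if i = j then t - of_real (mu!(i-1)) else 0)"
    if "i < n+1" "j < n+1" for i j
    using that mu unfolding B_def char_matrix_def p_def block_p_def by auto
  define s where "s = t - of_real c - (\<Sum>j<n. cnj(z$j) * z$j / (t - of_real(mu!j)))"
  define L where "L = mat (n+1) (n+1) (\<lambda>(i,j). if i = j then 1 else if j = 0 then z$(i-1) / (t - of_real (mu!(i-1))) else 0)"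
  define U where "U = mat (n+1) (n+1) (\<lambda>(i,j). if j = 0 then (if i = 0 then s else 0) else B $$ (i,j))"
  have Lc: "L \<in> carrier_mat (n+1) (n+1)" unfolding L_def by auto
  have Uc: "U \<in> carrier_mat (n+1) (n+1)" unfolding U_def by auto
  have BL: "B * L = U"
  proof (rule eq_matI)
    fix i j assume i: "i < dim_row U" and j: "j < dim_col U"
    have "(B * L) $$ (i,j) = (\<Sum>k<n+1. B $$ (i,k) * L $$ (k,j))"
      using i j Bc Lc Uc by (simp add: scalar_prod_def lessThan_atLeast0)
    also have "\<dots> = U $$ (i,j)"
    proof (cases "j = 0")
      case True
      have "(\<Sum>k<n+1. B $$ (i,k) * L $$ (k,j)) = B $$ (i,0) + (\<Sum>k<n. B $$ (i,Suc k) * (z$k / (t - of_real (mu!k))))"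
        using True by (simp add: sum.lessThan_Suc_shift del: sum.lessThan_Suc add: L_def)
      also have "\<dots> = U $$ (i,j)"
      proof (cases i)
        case 0
        have "B $$ (i,0) + (\<Sum>k<n. B $$ (i,Suc k) * (z$k / (t - of_real (mu!k)))) = 
           t - of_real c + (\<Sum>k<n. - (cnj (z$k) * z$k / (t - of_real (mu!k))))"
          using 0 by (simp add: Bij)
        also have "\<dots> = s" unfolding s_def by (simp add: sum_negf)
        finally show ?thesis using 0 True by (simp add: U_def)
      next
        case (Suc i')
        have i': "i' < n" using Suc i Uc by auto
        have "(\<Sum>k<n. B $$ (i,Suc k) * (z$k / (t - of_real (mu!k)))) = 
              (\<Sum>k<n. if k = i' then z$i' else 0)"
          using Suc t i' by (intro sum.cong) (auto simp: Bij)
        also have "\<dots> = z$i'" using i' by simp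
        finally show ?thesis using Suc True i' Bij[of i 0] by (simp add: U_def)
      qed
      finally show ?thesis .
    next
      case False
      have "(\<Sum>k<n+1. B $$ (i,k) * L $$ (k,j)) = (\<Sum>k<n+1. if k = j then B $$ (i,j) else 0)"
        by (rule sum.cong, insert False j Uc, auto simp: L_def)
      also have "\<dots> = B $$ (i,j)" using j Uc by simp
      finally show ?thesis using False i j Uc by (simp add: U_def)
    qed
    finally show "(B * L) $$ (i,j) = U $$ (i,j)" .
  qed (insert Bc Lc Uc, auto)
  have dL: "det L = 1"
  proof -
    have "det L = prod_list (diag_mat L)" by (rule det_lower_triangular[OF _ Lc]) (auto simp: L_def)
    also have "\<dots> = (\<Prod>i<n+1. L $$ (i,i))" by (rule prod_list_diag[OF Lc])
    also have "\<dots> = 1" by (rule prod.neutral) (simp add: L_def)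
    finally show ?thesis .
  qed
  have dU: "det U = s * (\<Prod>j<n. t - of_real(mu!j))"
  proof -
    have "upper_triangular U" using Uc Bc Bij unfolding upper_triangular_def by (auto simp: U_def)
    then have "det U = (\<Prod>i<n+1. U $$ (i,i))" by (simp add: det_upper_triangular[OF _ Uc] prod_list_diag[OF Uc])
    also have "\<dots> = U $$ (0,0) * (\<Prod>i<n. U $$ (Suc i, Suc i))" by (simp add: prod.lessThan_Suc_shift del: prod.lessThan_Suc)
    also have "\<dots> = s * (\<Prod>j<n. t - of_real(mu!j))" using Bij by (simp add: U_def)
    finally show ?thesis .
  qed
  have "poly (char_poly p) t = det B" unfolding B_def by (rule char_poly_matrix[OF pc])
  also have "\<dots> = det (B * L)" using det_mult[OF Bc Lc] dL by simp
  finally show ?thesis using BL dU unfolding p_def s_def by simp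
qed

lemma poly_eq_cofinite:
  fixes p q :: "complex poly"
  assumes F: "finite F" and eq: "\<And>t. t \<notin> F \<Longrightarrow> poly p t = poly q t"
  shows "p = q"
proof (rule ccontr)
  assume "p \<noteq> q"
  then have "p - q \<noteq> 0" by simp
  then have "finite {x. poly (p - q) x = 0}" by (rule poly_roots_finite)
  moreover have "- F \<subseteq> {x. poly (p - q) x = 0}" using eq by auto
  ultimately have "finite (- F)" by (rule finite_subset[rotated])
  with F have "finite (UNIV :: complex set)" by (metis Compl_partition finite_Un)
  then show False by (simp add: infinite_UNIV_char_0)
qed

lemma order_prod_lin:
  fixes f :: "'b \<Rightarrow> 'a::idom"
  assumes "finite A"
  shows "order a (\<Prod>x\<in>A. [:-f x, 1:] ^ k x) = (\<Sum>x\<in>{x\<in>A. f x = a}. k x)"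
  using assms
proof (induction A rule: finite_induct)
  case empty
  then show ?case by simp
next
  case (insert y A)
  have nz: "(\<Prod>x\<in>A. [:-f x, 1:] ^ k x) \<noteq> 0" using insert by (auto simp: prod_zero_iff)
  have "order a (\<Prod>x\<in>insert y A. [:-f x, 1:] ^ k x) = order a ([:-f y, 1:] ^ k y) + order a (\<Prod>x\<in>A. [:-f x, 1:] ^ k x)"
    using insert nz by (simp add: order_mult)
  also have "order a ([:-f y, 1:] ^ k y) = (if f y = a then k y else 0)"
  proof (cases "f y = a")
    case True then show ?thesis by (simp add: order_power_n_n)
  next
    case False
    then have "poly ([:-f y, 1:] ^ k y) a \<noteq> 0" by (simp add: poly_power)
    then show ?thesis using False by (simp add: order_0I)
  qed
  finally have e: "order a (\<Prod>x\<in>insert y A. [:-f x, 1:] ^ k x) = (if f y = a then k y else 0) + order a (\<Prod>x\<in>A. [:-f x, 1:] ^ k x)" .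
  have "{x\<in>insert y A. f x = a} = (if f y = a then insert y {x\<in>A. f x = a} else {x\<in>A. f x = a})" by auto
  then show ?case using insert e by auto
qed

lemma count_list_card: "count_list xs v = card {i. i < length xs \<and> xs ! i = v}"
proof -
  have "count_list xs v = length (filter (\<lambda>y. y = v) xs)" by (induct xs) auto
  then show ?thesis by (simp add: length_filter_conv_card)
qed

definition lin :: "real \<Rightarrow> complex poly" where "lin a = [:- complex_of_real a, 1:]"
definition gT :: "real set \<Rightarrow> complex poly" where "gT T = (\<Prod>\<sigma>\<in>T. lin \<sigma>)"
definition Rpoly :: "real \<Rightarrow> (real \<Rightarrow> real) \<Rightarrow> real set \<Rightarrow> complex poly" where
  "Rpoly c w T = lin c * gT T - (\<Sum>\<sigma>\<in>T. Polynomial.smult (of_real (w \<sigma>)) (gT (T - {\<sigma>})))"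
definition Gpoly :: "real \<Rightarrow> (real \<Rightarrow> real) \<Rightarrow> real set \<Rightarrow> complex poly" where
  "Gpoly l w T = gT T + (\<Sum>\<sigma>\<in>T. Polynomial.smult (of_real (w \<sigma> / (l - \<sigma>))) (gT (T - {\<sigma>})))"

lemma poly_lin[simp]: "poly (lin a) t = t - of_real a" by (simp add: lin_def)
lemma poly_gT: "poly (gT T) t = (\<Prod>\<sigma>\<in>T. t - of_real \<sigma>)" by (simp add: gT_def poly_prod)

lemma poly_gT_remove: assumes "finite T" "\<sigma> \<in> T" "t \<noteq> of_real \<sigma>"
  shows "poly (gT (T-{\<sigma>})) t = poly (gT T) t / (t - of_real \<sigma>)"
  using assms by (simp add: poly_gT prod.remove[of T \<sigma>])

lemma poly_Rpoly: assumes T: "finite T" and t: "t \<notin> of_real ` T"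
  shows "poly (Rpoly c w T) t = poly (gT T) t * (t - of_real c - (\<Sum>\<sigma>\<in>T. of_real (w \<sigma>) / (t - of_real \<sigma>)))"
proof -
  have "poly (Rpoly c w T) t = (t - of_real c) * poly (gT T) t - (\<Sum>\<sigma>\<in>T. of_real (w \<sigma>) * poly (gT (T - {\<sigma>})) t)"
    by (simp add: Rpoly_def poly_sum)
  also have "(\<Sum>\<sigma>\<in>T. of_real (w \<sigma>) * poly (gT (T - {\<sigma>})) t) = (\<Sum>\<sigma>\<in>T. poly (gT T) t * (of_real (w \<sigma>) / (t - of_real \<sigma>)))"
  proof (intro sum.cong refl)
    fix \<sigma> assume s: "\<sigma> \<in> T"
    then have "t \<noteq> of_real \<sigma>" using t by auto
    then show "of_real (w \<sigma>) * poly (gT (T - {\<sigma>})) t = poly (gT T) t * (of_real (w \<sigma>) / (t - of_real \<sigma>))"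
      by (simp add: poly_gT_remove[OF T s])
  qed
  finally show ?thesis by (simp add: algebra_simps sum_distrib_left)
qed

lemma poly_Rpoly_at: assumes T: "finite T" and \<tau>: "\<tau> \<in> T"
  shows "poly (Rpoly c w T) (of_real \<tau>) = - of_real (w \<tau>) * of_real (\<Prod>\<sigma>\<in>T-{\<tau>}. \<tau> - \<sigma>)"
proof -
  have g0: "poly (gT T) (of_real \<tau>) = 0" using T \<tau> by (auto simp: poly_gT)
  have z: "(\<Sum>\<sigma>\<in>T-{\<tau>}. of_real (w \<sigma>) * poly (gT (T - {\<sigma>})) (of_real \<tau>)) = 0"
    using T \<tau> by (intro sum.neutral) (auto simp: poly_gT)
  have "(\<Sum>\<sigma>\<in>T. of_real (w \<sigma>) * poly (gT (T - {\<sigma>})) (of_real \<tau>)) = of_real (w \<tau>) * poly (gT (T - {\<tau>})) (of_real \<tau>)"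
    using sum.remove[OF T \<tau>, of "\<lambda>\<sigma>. of_real (w \<sigma>) * poly (gT (T - {\<sigma>})) (of_real \<tau>)"] z by simp
  then show ?thesis using g0 by (simp add: Rpoly_def poly_sum poly_gT)
qed

lemma poly_Gpoly_nz: assumes T: "finite T" and l: "l \<notin> T" and w: "\<forall>\<sigma>\<in>T. w \<sigma> \<ge> 0"
  shows "poly (Gpoly l w T) (of_real l) \<noteq> 0"
proof -
  define g where "g = (\<Prod>\<sigma>\<in>T. l - \<sigma>)"
  have g0: "g \<noteq> 0" using T l by (auto simp: g_def)
  have rem: "(\<Prod>\<sigma>'\<in>T-{\<sigma>}. l - \<sigma>') = g / (l - \<sigma>)" if "\<sigma> \<in> T" for \<sigma>
  proof -
    have "l - \<sigma> \<noteq> 0" using that l by auto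
    then show ?thesis using that T by (simp add: g_def prod.remove[of T \<sigma>])
  qed
  have "poly (Gpoly l w T) (of_real l) = of_real (g + (\<Sum>\<sigma>\<in>T. w \<sigma> / (l - \<sigma>) * (\<Prod>\<sigma>'\<in>T-{\<sigma>}. l - \<sigma>')))"
    by (simp add: Gpoly_def poly_sum poly_gT g_def)
  also have "(\<Sum>\<sigma>\<in>T. w \<sigma> / (l - \<sigma>) * (\<Prod>\<sigma>'\<in>T-{\<sigma>}. l - \<sigma>')) = (\<Sum>\<sigma>\<in>T. g * (w \<sigma> / (l - \<sigma>)^2))"
    by (intro sum.cong) (auto simp: rem power2_eq_square)
  also have "g + \<dots> = g * (1 + (\<Sum>\<sigma>\<in>T. w \<sigma> / (l - \<sigma>)^2))" by (simp add: sum_distrib_left algebra_simps)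
  finally have e: "poly (Gpoly l w T) (of_real l) = of_real (g * (1 + (\<Sum>\<sigma>\<in>T. w \<sigma> / (l - \<sigma>)^2)))" .
  have "(\<Sum>\<sigma>\<in>T. w \<sigma> / (l - \<sigma>)^2) \<ge> 0" using w by (intro sum_nonneg) auto
  then have "1 + (\<Sum>\<sigma>\<in>T. w \<sigma> / (l - \<sigma>)^2) \<noteq> 0" by linarith
  then have "g * (1 + (\<Sum>\<sigma>\<in>T. w \<sigma> / (l - \<sigma>)^2)) \<noteq> 0" using g0 by simp
  then show ?thesis unfolding e of_real_eq_0_iff .
qed

lemma Rpoly_factor: assumes T: "finite T" and l: "l \<notin> T" and r: "poly (Rpoly c w T) (of_real l) = 0"
  shows "Rpoly c w T = lin l * Gpoly l w T"
proof (rule poly_eq_cofinite[of "of_real ` T"])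
  show "finite (complex_of_real ` T)" using T by simp
  fix t assume t: "t \<notin> complex_of_real ` T"
  have lT: "complex_of_real l \<notin> complex_of_real ` T" using l by auto
  have gl: "poly (gT T) (of_real l) \<noteq> 0" using T l by (auto simp: poly_gT)
  have r0: "of_real l - of_real c - (\<Sum>\<sigma>\<in>T. of_real (w \<sigma>) / (of_real l - of_real \<sigma>)) = (0::complex)"
    using r poly_Rpoly[OF T lT, of c w] gl by simp
  have tn: "t - of_real \<sigma> \<noteq> 0" "of_real l - of_real \<sigma> \<noteq> (0::complex)" if "\<sigma> \<in> T" for \<sigma>
    using t that l by auto
  have pG: "poly (Gpoly l w T) t = poly (gT T) t * (1 + (\<Sum>\<sigma>\<in>T. of_real (w \<sigma>) / ((of_real l - of_real \<sigma>) * (t - of_real \<sigma>))))"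
  proof -
    have "poly (Gpoly l w T) t = poly (gT T) t + (\<Sum>\<sigma>\<in>T. of_real (w \<sigma> / (l - \<sigma>)) * poly (gT (T - {\<sigma>})) t)"
      by (simp add: Gpoly_def poly_sum)
    also have "(\<Sum>\<sigma>\<in>T. of_real (w \<sigma> / (l - \<sigma>)) * poly (gT (T - {\<sigma>})) t) = 
       (\<Sum>\<sigma>\<in>T. poly (gT T) t * (of_real (w \<sigma>) / ((of_real l - of_real \<sigma>) * (t - of_real \<sigma>))))"
    proof (intro sum.cong refl)
      fix \<sigma> assume s: "\<sigma> \<in> T"
      then have "t \<noteq> of_real \<sigma>" using t by auto
      then show "of_real (w \<sigma> / (l - \<sigma>)) * poly (gT (T - {\<sigma>})) t = poly (gT T) t * (of_real (w \<sigma>) / ((of_real l - of_real \<sigma>) * (t - of_real \<sigma>)))"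
        by (simp add: poly_gT_remove[OF T s])
    qed
    finally show ?thesis by (simp add: sum_distrib_left algebra_simps)
  qed
  have key: "(t - of_real l) * (1 + (\<Sum>\<sigma>\<in>T. of_real (w \<sigma>) / ((of_real l - of_real \<sigma>) * (t - of_real \<sigma>))))
      = t - of_real c - (\<Sum>\<sigma>\<in>T. of_real (w \<sigma>) / (t - of_real \<sigma>))"
  proof -
    have "(t - of_real l) * (1 + (\<Sum>\<sigma>\<in>T. of_real (w \<sigma>) / ((of_real l - of_real \<sigma>) * (t - of_real \<sigma>))))
       = t - of_real l + (\<Sum>\<sigma>\<in>T. of_real (w \<sigma>) / (of_real l - of_real \<sigma>) - of_real (w \<sigma>) / (t - of_real \<sigma>))"
    proof -
      have trm: "(t - of_real l) * (of_real (w \<sigma>) / ((of_real l - of_real \<sigma>) * (t - of_real \<sigma>))) = 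
          of_real (w \<sigma>) / (of_real l - of_real \<sigma>) - of_real (w \<sigma>) / (t - of_real \<sigma>)" if "\<sigma> \<in> T" for \<sigma>
        using tn[OF that] by (simp add: field_simps)
      show ?thesis unfolding distrib_left sum_distrib_left using trm by simp
    qed
    also have "\<dots> = t - of_real c - (\<Sum>\<sigma>\<in>T. of_real (w \<sigma>) / (t - of_real \<sigma>))"
      using r0 by (simp add: sum_subtractf) (metis add_diff_cancel_left' diff_add_cancel minus_diff_eq)
    finally show ?thesis .
  qed
  show "poly (Rpoly c w T) t = poly (lin l * Gpoly l w T) t"
    unfolding poly_mult poly_lin pG poly_Rpoly[OF T t] key[symmetric] by (simp only: mult_ac)
qed

lemma order_Rpoly_le: assumes T: "finite T" and l: "l \<notin> T" and w: "\<forall>\<sigma>\<in>T. w \<sigma> \<ge> 0"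
  shows "order (of_real l) (Rpoly c w T) \<le> 1"
proof (cases "poly (Rpoly c w T) (of_real l) = 0")
  case False then show ?thesis by (simp add: order_0I)
next
  case True
  have e: "Rpoly c w T = lin l * Gpoly l w T" by (rule Rpoly_factor[OF T l True])
  have G: "poly (Gpoly l w T) (of_real l) \<noteq> 0" by (rule poly_Gpoly_nz[OF T l w])
  then have "Gpoly l w T \<noteq> 0" by auto
  moreover have "lin l \<noteq> 0" by (simp add: lin_def)
  ultimately have nz: "lin l * Gpoly l w T \<noteq> 0" by simp
  have "order (of_real l) (Rpoly c w T) = order (of_real l) (lin l) + order (of_real l) (Gpoly l w T)"
    unfolding e by (rule order_mult[OF nz])
  also have "order (of_real l) (lin l) = 1" using order_power_n_n[of "of_real l" 1] by (simp add: lin_def)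
  finally show ?thesis using G by (simp add: order_0I)
qed

lemma XD_entry:
  assumes X: "X \<in> carrier_mat n n" and mu: "length mu = n" and i: "i < n" and j: "j < n"
  shows "(X * diag_mat_of mu) $$ (j,i) = X $$ (j,i) * of_real (mu!i)"
proof -
  have "(X * diag_mat_of mu) $$ (j,i) = (\<Sum>k\<in>{0..<n}. X $$ (j,k) * diag_mat_of mu $$ (k,i))"
    using X mu i j by (simp add: diag_mat_of_def scalar_prod_def)
  also have "\<dots> = (\<Sum>k\<in>{0..<n}. (if k = i then X $$ (j,i) * of_real (mu!i) else 0))"
    using mu i by (intro sum.cong) (auto simp: diag_mat_of_def)
  also have "\<dots> = X $$ (j,i) * of_real (mu!i)"
    using i by simp
  finally show ?thesis .
qed

lemma DX_entry:
  assumes X: "X \<in> carrier_mat n n" and mu: "length mu = n" and i: "i < n" and j: "j < n"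
  shows "(diag_mat_of mu * X) $$ (j,i) = of_real (mu!j) * X $$ (j,i)"
proof -
  have "(diag_mat_of mu * X) $$ (j,i) = (\<Sum>k\<in>{0..<n}. diag_mat_of mu $$ (j,k) * X $$ (k,i))"
    using X mu i j by (simp add: diag_mat_of_def scalar_prod_def)
  also have "\<dots> = (\<Sum>k\<in>{0..<n}. (if k = j then of_real (mu!j) * X $$ (j,i) else 0))"
    using mu j by (intro sum.cong) (auto simp: diag_mat_of_def)
  also have "\<dots> = of_real (mu!j) * X $$ (j,i)"
    using j by simp
  finally show ?thesis .
qed

lemma entry_expand:
  assumes i: "i < n" and j: "j < n" and xc: "x \<in> carrier_vec n" and zc: "z \<in> carrier_vec n" and Xc: "X \<in> carrier_mat n n" and mulen: "length mu = n"
  shows "(outer x z + outer z x + (X * diag_mat_of mu - diag_mat_of mu * X)) $$ (j,i) = 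
         x$j * cnj (z$i) + z$j * cnj (x$i) + ((X * diag_mat_of mu) $$ (j,i) - (diag_mat_of mu * X) $$ (j,i))"
proof -
  have Ddim: "dim_row (diag_mat_of mu) = n" "dim_col (diag_mat_of mu) = n" using mulen by (simp_all add: diag_mat_of_def)
  have Xd: "dim_row X = n" "dim_col X = n" using Xc by auto
  have o: "outer x z $$ (j,i) = x$j * cnj (z$i)" "outer z x $$ (j,i) = z$j * cnj (x$i)"
     "dim_row (outer z x) = n" "dim_col (outer z x) = n"
    using xc zc i j by (auto simp: outer_def)
  have "(outer x z + outer z x + (X * diag_mat_of mu - diag_mat_of mu * X)) $$ (j,i) = 
     (outer x z + outer z x) $$ (j,i) + (X * diag_mat_of mu - diag_mat_of mu * X) $$ (j,i)"
    by (rule index_add_mat(1)) (simp_all only: index_minus_mat(2,3) index_mult_mat(2,3) Ddim Xd i j)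
  also have "(outer x z + outer z x) $$ (j,i) = outer x z $$ (j,i) + outer z x $$ (j,i)"
    by (rule index_add_mat(1)) (simp_all only: o i j)
  also have "(X * diag_mat_of mu - diag_mat_of mu * X) $$ (j,i) = (X * diag_mat_of mu) $$ (j,i) - (diag_mat_of mu * X) $$ (j,i)"
    by (rule index_minus_mat(1)) (simp_all only: index_mult_mat(2,3) Ddim Xd i j)
  finally show ?thesis by (simp only: o)
qed

theorem lemma4p4:
  fixes n :: nat and lam mu :: "real list" and c :: real and z x :: "complex vec"
    and X :: "complex mat" and \<mu> :: real
  assumes "n \<ge> 1"
    and "length lam = n + 1" and "sorted_wrt (\<ge>) lam"
    and "length mu = n" and "sorted_wrt (\<ge>) mu"
    and "z \<in> carrier_vec n" and "x \<in> carrier_vec n"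
    and "block_p c z mu \<in> orbit_O lam"
    and "X \<in> carrier_mat n n" and "skew_hermitian_mat X"
    and "outer x z + outer z x + (X * diag_mat_of mu - diag_mat_of mu * X) = 0\<^sub>m n n"
    and "\<mu> \<in> set mu" and "\<not> M_shape lam mu \<mu>"
  shows "\<forall>j<n. mu ! j = \<mu> \<longrightarrow>
    (X *\<^sub>v z) $ j =
      complex_of_real (\<Sum>\<tau>\<in>{\<tau> \<in> set mu. M_shape lam mu \<tau>}. r_sq lam mu \<tau> / (\<mu> - \<tau>)) * x $ j"
proof -
  note lamlen = assms(2) and mulen = assms(4) and zc = assms(6) and xc = assms(7)
    and orb = assms(8) and Xc = assms(9) and eqn = assms(11) and muin = assms(12) and notM = assms(13)
  define S where "S = set mu"
  define m where "m \<sigma> = count_list mu \<sigma>" for \<sigma>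
  define w where "w \<sigma> = (\<Sum>i\<in>{i. i < n \<and> mu!i = \<sigma>}. (cmod (z$i))^2)" for \<sigma>
  define Sp where "Sp = {\<sigma>\<in>S. w \<sigma> \<noteq> 0}"
  define S0 where "S0 = S - Sp"
  define P where "P = (\<Prod>i<n+1. [:- complex_of_real (lam ! i), 1:])"
  define Pre where "Pre = (\<Prod>\<sigma>\<in>S. lin \<sigma> ^ (m \<sigma> - 1)) * gT S0"
  define R where "R = Rpoly c w Sp"
  have finS: "finite S" and finSp: "finite Sp" and finS0: "finite S0" and SpS: "Sp \<subseteq> S"
    by (auto simp: S_def Sp_def S0_def)
  have wnn: "w \<sigma> \<ge> 0" for \<sigma> unfolding w_def by (intro sum_nonneg) auto
  have mpos: "m \<sigma> \<ge> 1" if "\<sigma> \<in> S" for \<sigma>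
    using that count_list_0_iff[of mu \<sigma>] by (auto simp: m_def S_def)
  have mcard: "m \<sigma> = card {i. i < n \<and> mu!i = \<sigma>}" for \<sigma>
    using count_list_card[of mu \<sigma>] mulen by (simp add: m_def)
  have cp: "char_poly (block_p c z mu) = P"
    using orb lamlen by (simp add: orbit_O_def P_def)
  have fib: "(\<lambda>j. mu!j) ` {..<n} \<subseteq> S" using mulen by (auto simp: S_def)
  have fibeq: "{j \<in> {..<n}. mu!j = \<sigma>} = {i. i < n \<and> mu!i = \<sigma>}" for \<sigma> by auto

  have PI: "P = Pre * R"
  proof (rule poly_eq_cofinite[of "of_real ` S"])
    show "finite (complex_of_real ` S)" using finS by simp
    fix t assume t: "t \<notin> complex_of_real ` S"
    have tj: "\<forall>j<n. t \<noteq> of_real (mu!j)" using t mulen by (auto simp: S_def)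
    have tSp: "t \<notin> complex_of_real ` Sp" using t SpS by auto
    have "poly P t = (\<Prod>j<n. t - of_real(mu!j)) * (t - of_real c - (\<Sum>j<n. cnj(z$j) * z$j / (t - of_real(mu!j))))"
      using det_block[OF zc mulen tj, of c] cp by simp
    also have "(\<Prod>j<n. t - of_real(mu!j)) = (\<Prod>\<sigma>\<in>S. (t - of_real \<sigma>)^(m \<sigma>))"
    proof -
      have "(\<Prod>j<n. t - of_real(mu!j)) = (\<Prod>\<sigma>\<in>S. \<Prod>j\<in>{j \<in> {..<n}. mu!j = \<sigma>}. t - of_real(mu!j))"
        by (rule prod.group[OF _ finS fib, symmetric]) simp
      also have "\<dots> = (\<Prod>\<sigma>\<in>S. (t - of_real \<sigma>)^(m \<sigma>))"
        by (intro prod.cong refl) (simp add: fibeq mcard)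
      finally show ?thesis .
    qed
    also have "(\<Sum>j<n. cnj(z$j) * z$j / (t - of_real(mu!j))) = (\<Sum>\<sigma>\<in>Sp. of_real (w \<sigma>) / (t - of_real \<sigma>))"
    proof -
      have "(\<Sum>j<n. cnj(z$j) * z$j / (t - of_real(mu!j))) = (\<Sum>j<n. of_real ((cmod (z$j))^2) / (t - of_real(mu!j)))"
        by (intro sum.cong refl) (metis complex_norm_square mult.commute)
      also have "\<dots> = (\<Sum>\<sigma>\<in>S. \<Sum>j\<in>{j \<in> {..<n}. mu!j = \<sigma>}. of_real ((cmod (z$j))^2) / (t - of_real(mu!j)))"
        by (rule sum.group[OF _ finS fib, symmetric]) simp
      also have "\<dots> = (\<Sum>\<sigma>\<in>S. of_real (w \<sigma>) / (t - of_real \<sigma>))"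
        by (intro sum.cong refl) (simp add: fibeq w_def sum_divide_distrib)
      also have "\<dots> = (\<Sum>\<sigma>\<in>Sp. of_real (w \<sigma>) / (t - of_real \<sigma>))"
        by (rule sum.mono_neutral_right[OF finS SpS]) (auto simp: Sp_def)
      finally show ?thesis .
    qed
    finally have lhs: "poly P t = (\<Prod>\<sigma>\<in>S. (t - of_real \<sigma>)^(m \<sigma>)) * (t - of_real c - (\<Sum>\<sigma>\<in>Sp. of_real (w \<sigma>) / (t - of_real \<sigma>)))" .
    have "poly (Pre * R) t = (\<Prod>\<sigma>\<in>S. (t - of_real \<sigma>)^(m \<sigma> - 1)) * (\<Prod>\<sigma>\<in>S0. (t - of_real \<sigma>)) * 
       ((\<Prod>\<sigma>\<in>Sp. (t - of_real \<sigma>)) * (t - of_real c - (\<Sum>\<sigma>\<in>Sp. of_real (w \<sigma>) / (t - of_real \<sigma>))))"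
      unfolding R_def poly_mult poly_Rpoly[OF finSp tSp] by (simp add: Pre_def poly_prod poly_gT)
    also have "(\<Prod>\<sigma>\<in>S. (t - of_real \<sigma>)^(m \<sigma> - 1)) * (\<Prod>\<sigma>\<in>S0. (t - of_real \<sigma>)) * (\<Prod>\<sigma>\<in>Sp. (t - of_real \<sigma>))
       = (\<Prod>\<sigma>\<in>S. (t - of_real \<sigma>)^(m \<sigma>))"
    proof -
      have "(\<Prod>\<sigma>\<in>S0. (t - of_real \<sigma>)) * (\<Prod>\<sigma>\<in>Sp. (t - of_real \<sigma>)) = (\<Prod>\<sigma>\<in>S. (t - of_real \<sigma>))"
        unfolding S0_def by (rule prod.subset_diff[OF SpS finS, symmetric])
      moreover have "(\<Prod>\<sigma>\<in>S. (t - of_real \<sigma>)^(m \<sigma> - 1)) * (\<Prod>\<sigma>\<in>S. (t - of_real \<sigma>)) = (\<Prod>\<sigma>\<in>S. (t - of_real \<sigma>)^(m \<sigma>))"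
        unfolding prod.distrib[symmetric]
      proof (intro prod.cong refl)
        fix \<sigma> assume "\<sigma> \<in> S"
        then have "m \<sigma> = Suc (m \<sigma> - 1)" using mpos by force
        then show "(t - of_real \<sigma>)^(m \<sigma> - 1) * (t - of_real \<sigma>) = (t - of_real \<sigma>)^(m \<sigma>)"
          by (metis power_Suc2)
      qed
      ultimately show ?thesis by (simp add: mult.assoc)
    qed
    ultimately show "poly P t = poly (Pre * R) t" using lhs by (simp add: mult.assoc)
  qed

  have Pnz: "P \<noteq> 0" unfolding P_def by (simp only: prod_zero_iff finite_lessThan) simp
  then have Prenz: "Pre \<noteq> 0" and Rnz: "R \<noteq> 0" using PI by auto
  have ordP: "order (of_real l) P = count_list lam l" for l
  proof -
    have "P = (\<Prod>i\<in>{..<n+1}. [:- complex_of_real (lam ! i), 1:] ^ 1)" by (simp add: P_def)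
    then have "order (of_real l) P = (\<Sum>i\<in>{i\<in>{..<n+1}. of_real (lam ! i) = (of_real l :: complex)}. 1)"
      using order_prod_lin[of "{..<n+1}" "of_real l" "\<lambda>i. complex_of_real (lam ! i)" "\<lambda>_. 1"] by simp
    also have "{i\<in>{..<n+1}. of_real (lam ! i) = (of_real l :: complex)} = {i. i < length lam \<and> lam ! i = l}"
      using lamlen by auto
    finally show ?thesis by (simp add: count_list_card)
  qed
  have ordPre: "order (of_real l) Pre = (if l \<in> S then m l - 1 else 0) + (if l \<in> S0 then 1 else 0)" for l
  proof -
    have A: "(\<Prod>\<sigma>\<in>S. lin \<sigma> ^ (m \<sigma> - 1)) = (\<Prod>\<sigma>\<in>S. [:- complex_of_real \<sigma>, 1:] ^ (m \<sigma> - 1))"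
      by (simp add: lin_def)
    have B: "gT S0 = (\<Prod>\<sigma>\<in>S0. [:- complex_of_real \<sigma>, 1:] ^ 1)" by (simp add: gT_def lin_def)
    have e1: "{\<sigma>\<in>S. complex_of_real \<sigma> = of_real l} = (if l \<in> S then {l} else {})" by auto
    have e2: "{\<sigma>\<in>S0. complex_of_real \<sigma> = of_real l} = (if l \<in> S0 then {l} else {})" by auto
    have "order (of_real l) Pre = order (of_real l) (\<Prod>\<sigma>\<in>S. lin \<sigma> ^ (m \<sigma> - 1)) + order (of_real l) (gT S0)"
      using Prenz unfolding Pre_def by (rule order_mult)
    also have "\<dots> = (if l \<in> S then m l - 1 else 0) + (if l \<in> S0 then 1 else 0)"
      unfolding A B order_prod_lin[OF finS] order_prod_lin[OF finS0] e1 e2 by simp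
    finally show ?thesis .
  qed
  have ordsum: "count_list lam l = (if l \<in> S then m l - 1 else 0) + (if l \<in> S0 then 1 else 0) + order (of_real l) R" for l
    using ordP[of l] ordPre[of l] order_mult[of Pre R "of_real l"] PI Pnz by simp
  have R1: "order (of_real \<sigma>) R = 0" if "\<sigma> \<in> Sp" for \<sigma>
  proof (rule order_0I)
    have "w \<sigma> \<noteq> 0" using that by (simp add: Sp_def)
    moreover have "(\<Prod>\<sigma>'\<in>Sp-{\<sigma>}. \<sigma> - \<sigma>') \<noteq> 0" using finSp by auto
    ultimately show "poly R (of_real \<sigma>) \<noteq> 0" unfolding R_def poly_Rpoly_at[OF finSp that] by (metis mult_eq_0_iff of_real_eq_0_iff neg_equal_0_iff_equal)
  qed
  have R2: "order (of_real l) R \<le> 1" if "l \<notin> Sp" for l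
    unfolding R_def by (rule order_Rpoly_le[OF finSp that]) (simp add: wnn)
  have MSp: "M_shape lam mu \<sigma> \<longleftrightarrow> \<sigma> \<in> Sp" if "\<sigma> \<in> S" for \<sigma>
  proof -
    have M: "M_shape lam mu \<sigma> \<longleftrightarrow> m \<sigma> = count_list lam \<sigma> + 1"
      by (simp add: M_shape_def n_occ_def m_def)
    show ?thesis
    proof (cases "\<sigma> \<in> Sp")
      case True
      then show ?thesis using ordsum[of \<sigma>] R1[OF True] mpos[OF that] that M by (auto simp: S0_def)
    next
      case False
      then show ?thesis using ordsum[of \<sigma>] mpos[OF that] that M by (auto simp: S0_def)
    qed
  qed
  have Wiff: "W_shape lam mu l \<longleftrightarrow> order (of_real l) R = 1" for l
  proof -
    have W: "W_shape lam mu l \<longleftrightarrow> count_list lam l = m l + 1"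
      by (simp add: W_shape_def n_occ_def m_def)
    show ?thesis
    proof (cases "l \<in> Sp")
      case True
      then show ?thesis using ordsum[of l] R1[OF True] SpS W by (auto simp: S0_def)
    next
      case False
      note le = R2[OF False]
      show ?thesis
      proof (cases "l \<in> S")
        case True
        then show ?thesis using ordsum[of l] le False W mpos[OF True] by (auto simp: S0_def)
      next
        case nS: False
        then have "m l = 0" by (simp add: m_def S_def)
        then show ?thesis using ordsum[of l] le nS W by (auto simp: S0_def)
      qed
    qed
  qed

  define Wset where "Wset = {l\<in>set lam. W_shape lam mu l}"
  have finW: "finite Wset" by (simp add: Wset_def)
  have leadP: "lead_coeff P = 1" unfolding P_def lead_coeff_prod by simp
  have leadPre: "lead_coeff Pre = 1" unfolding Pre_def lead_coeff_mult lead_coeff_prod gT_def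
    by (simp add: lin_def lead_coeff_power)
  have leadR: "lead_coeff R = 1" using leadP leadPre PI lead_coeff_mult[of Pre R] by simp
  have roots: "{a. poly R a = 0} = complex_of_real ` Wset"
  proof (intro equalityI subsetI)
    fix a assume "a \<in> {a. poly R a = 0}"
    then have Ra: "poly R a = 0" by simp
    then have "poly P a = 0" using PI by simp
    then have "\<exists>i\<in>{..<n+1}. poly [:- complex_of_real (lam ! i), 1:] a = 0"
      unfolding P_def poly_prod by (simp only: prod_zero_iff finite_lessThan)
    then obtain i where i: "i < n+1" and ai: "a = of_real (lam!i)" by auto
    define l where "l = lam!i"
    have lin: "l \<in> set lam" using i lamlen by (simp add: l_def)
    have o1: "order (of_real l) R \<noteq> 0" using Ra Rnz order_root[of R a] ai by (simp add: l_def)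
    have "l \<notin> Sp" using R1 o1 by auto
    then have "order (of_real l) R = 1" using R2[of l] o1 by simp
    then have "l \<in> Wset" using Wiff lin by (simp add: Wset_def)
    then show "a \<in> complex_of_real ` Wset" using ai by (simp add: l_def)
  next
    fix a assume "a \<in> complex_of_real ` Wset"
    then obtain l where l: "l \<in> Wset" and al: "a = of_real l" by auto
    then have "order (of_real l) R = 1" using Wiff by (simp add: Wset_def)
    then show "a \<in> {a. poly R a = 0}" using order_root[of R "of_real l"] al by simp
  qed
  have Rdec: "R = (\<Prod>l\<in>Wset. lin l)"
  proof -
    have "R = Polynomial.smult (lead_coeff R) (\<Prod>a|poly R a = 0. [:-a, 1:] ^ order a R)"
      by (rule complex_poly_decompose[symmetric])
    also have "\<dots> = (\<Prod>a\<in>complex_of_real ` Wset. [:-a, 1:] ^ order a R)"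
      using leadR roots by simp
    also have "\<dots> = (\<Prod>l\<in>Wset. [:-complex_of_real l, 1:] ^ order (complex_of_real l) R)"
      by (subst prod.reindex) (auto simp: inj_on_def)
    also have "\<dots> = (\<Prod>l\<in>Wset. lin l)"
      using Wiff by (intro prod.cong refl) (simp add: Wset_def lin_def)
    finally show ?thesis .
  qed
  have Rval: "poly R (of_real \<tau>) = of_real (\<Prod>l\<in>Wset. \<tau> - l)" for \<tau>
    by (simp add: Rdec poly_prod)
  have wr: "w \<tau> = r_sq lam mu \<tau>" if \<tau>: "\<tau> \<in> Sp" for \<tau>
  proof -
    have tS: "\<tau> \<in> S" using \<tau> SpS by auto
    have tM: "M_shape lam mu \<tau>" using MSp[OF tS] \<tau> by simp
    define \<Pi>1 where "\<Pi>1 = (\<Prod>\<sigma>\<in>Sp-{\<tau>}. \<tau> - \<sigma>)"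
    have p1: "\<Pi>1 \<noteq> 0" using finSp by (auto simp: \<Pi>1_def)
    have "complex_of_real (\<Prod>l\<in>Wset. \<tau> - l) = of_real (- w \<tau> * \<Pi>1)"
      using Rval[of \<tau>] poly_Rpoly_at[OF finSp \<tau>, of c w] unfolding R_def \<Pi>1_def by (simp only: of_real_mult of_real_minus)
    then have e: "(\<Prod>l\<in>Wset. \<tau> - l) = - w \<tau> * \<Pi>1" by (simp only: of_real_eq_iff)
    have setq: "{s \<in> set mu. M_shape lam mu s \<and> s \<noteq> \<tau>} = Sp - {\<tau>}"
      using MSp SpS by (auto simp: S_def)
    have "r_sq lam mu \<tau> = - (\<Prod>l\<in>Wset. \<tau> - l) * (\<Prod>s\<in>Sp-{\<tau>}. 1 / (\<tau> - s))"
      using tS tM setq by (simp add: r_sq_def S_def Wset_def)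
    also have "(\<Prod>s\<in>Sp-{\<tau>}. 1 / (\<tau> - s)) = 1 / \<Pi>1" unfolding \<Pi>1_def by (simp add: prod_dividef)
    finally show ?thesis using e p1 by simp
  qed
  show ?thesis
  proof (intro allI impI)
    fix j assume j: "j < n" and mj: "mu ! j = \<mu>"
    have muS: "\<mu> \<in> S" using muin by (simp add: S_def)
    have "\<mu> \<notin> Sp" using MSp[OF muS] notM by simp
    then have w0: "w \<mu> = 0" using muS by (simp add: Sp_def)
    have zb: "z$i = 0" if "i < n" "mu!i = \<mu>" for i
    proof -
      have "\<forall>i\<in>{i. i < n \<and> mu!i = \<mu>}. (cmod (z$i))^2 = 0"
        using w0 unfolding w_def by (subst sum_nonneg_eq_0_iff[symmetric]) auto
      then show ?thesis using that by simp
    qed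
    have zj: "z$j = 0" using zb j mj by simp
    have entry: "x$j * cnj (z$i) + z$j * cnj (x$i) + (X$$(j,i) * of_real (mu!i) - of_real (mu!j) * X$$(j,i)) = 0"
      if i: "i < n" for i
    proof -
      have "(outer x z + outer z x + (X * diag_mat_of mu - diag_mat_of mu * X)) $$ (j,i) = (0\<^sub>m n n :: complex mat) $$ (j,i)"
        by (simp only: eqn)
      moreover have "(outer x z + outer z x + (X * diag_mat_of mu - diag_mat_of mu * X)) $$ (j,i) = 
         x$j * cnj (z$i) + z$j * cnj (x$i) + ((X * diag_mat_of mu) $$ (j,i) - (diag_mat_of mu * X) $$ (j,i))"
        by (rule entry_expand[OF i j xc zc Xc mulen])
      ultimately show ?thesis using i j
        by (simp add: XD_entry[OF Xc mulen i j] DX_entry[OF Xc mulen i j] del: index_mult_mat)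
    qed
    have trm: "X$$(j,i) * z$i = x$j * of_real ((cmod (z$i))^2 / (\<mu> - mu!i))" if i: "i < n" for i
    proof (cases "mu!i = \<mu>")
      case True
      then show ?thesis using zb[OF i] by simp
    next
      case False
      have d: "complex_of_real (mu!i) - of_real \<mu> \<noteq> 0" using False by simp
      have "X$$(j,i) * (of_real (mu!i) - of_real \<mu>) = - x$j * cnj (z$i)"
        using entry[OF i] zj mj by (simp add: algebra_simps)
      then have Xji: "X$$(j,i) = - x$j * cnj (z$i) / (of_real (mu!i) - of_real \<mu>)"
        using d by (simp add: field_simps)
      have "X$$(j,i) * z$i = - x$j * (z$i * cnj (z$i)) / (of_real (mu!i) - of_real \<mu>)"
        unfolding Xji by (simp add: algebra_simps)
      also have "\<dots> = x$j * of_real ((cmod (z$i))^2 / (\<mu> - mu!i))"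
        unfolding complex_norm_square[symmetric] using d by (simp add: field_simps)
      finally show ?thesis .
    qed
    have "(X *\<^sub>v z) $ j = (\<Sum>i<n. X$$(j,i) * z$i)"
      using j Xc zc by (simp add: scalar_prod_def lessThan_atLeast0)
    also have "\<dots> = (\<Sum>i<n. x$j * of_real ((cmod (z$i))^2 / (\<mu> - mu!i)))"
      using trm by simp
    also have "\<dots> = x$j * of_real (\<Sum>i<n. (cmod (z$i))^2 / (\<mu> - mu!i))"
      by (simp add: sum_distrib_left)
    also have "(\<Sum>i<n. (cmod (z$i))^2 / (\<mu> - mu!i)) = (\<Sum>\<tau>\<in>{\<tau> \<in> set mu. M_shape lam mu \<tau>}. r_sq lam mu \<tau> / (\<mu> - \<tau>))"
    proof -
      have "(\<Sum>i<n. (cmod (z$i))^2 / (\<mu> - mu!i)) = (\<Sum>\<sigma>\<in>S. \<Sum>i\<in>{j \<in> {..<n}. mu!j = \<sigma>}. (cmod (z$i))^2 / (\<mu> - mu!i))"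
        by (rule sum.group[OF _ finS fib, symmetric]) simp
      also have "\<dots> = (\<Sum>\<sigma>\<in>S. w \<sigma> / (\<mu> - \<sigma>))"
        by (intro sum.cong refl) (simp add: fibeq w_def sum_divide_distrib)
      also have "\<dots> = (\<Sum>\<sigma>\<in>Sp. w \<sigma> / (\<mu> - \<sigma>))"
        by (rule sum.mono_neutral_right[OF finS SpS]) (auto simp: Sp_def)
      also have "\<dots> = (\<Sum>\<sigma>\<in>Sp. r_sq lam mu \<sigma> / (\<mu> - \<sigma>))"
        using wr by simp
      also have "Sp = {\<tau> \<in> set mu. M_shape lam mu \<tau>}" using MSp SpS by (auto simp: S_def)
      finally show ?thesis .
    qed
    finally show "(X *\<^sub>v z) $ j = complex_of_real (\<Sum>\<tau>\<in>{\<tau> \<in> set mu. M_shape lam mu \<tau>}. r_sq lam mu \<tau> / (\<mu> - \<tau>)) * x $ j"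
      by (simp add: mult.commute)
  qed
qed

end
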